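(* Let $\mathbf{u}=(u_n)$ be an a-sequence whose sequence of ratios $(q_n)$ is unbounded. Then $s_\mathbf{u}(\mathbb{T})=\{x\in\mathbb{T}: u_nx\to0\text{ in }\mathbb{T}\}$ is not an $F_\sigma$-subset of $\mathbb{T}$.
   Context: An a-sequence is a strictly increasing sequence of integers $\mathbf{u}=(u_n)_{n\in\mathbb{N}}$ with $u_n\mid u_{n+1}$ for all $n$; its ratios are $q_0=u_0$ and $q_n=u_n/u_{n-1}$ for $n>0$. $\mathbb{T}=\mathbb{R}/\mathbb{Z}$ with its usual compact topology. *)

theory Defs
  imports "HOL-Analysis.Analysis"
begin

definition a_sequence :: "(nat \<Rightarrow> int) \<Rightarrow> bool" where
  "a_sequence u \<longleftrightarrow> strict_mono u \<and> (\<forall>n. u n dvd u (Suc n))"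

definition ratios :: "(nat \<Rightarrow> int) \<Rightarrow> nat \<Rightarrow> int" where
  "ratios u n = (if n = 0 then u 0 else u n div u (n - 1))"

text \<open>The circle group T = R/Z, realised (homeomorphically, as a topological group)
  as the unit circle in the complex plane via the quotient map x mod 1 to exp(2 pi i x).\<close>
definition torus_map :: "real \<Rightarrow> complex" where
  "torus_map x = exp (2 * of_real pi * \<i> * of_real x)"

definition torus :: "complex set" where
  "torus = sphere 0 1"

definition torus_top :: "complex topology" where
  "torus_top = top_of_set torus"

definition s_u :: "(nat \<Rightarrow> int) \<Rightarrow> complex set" where
  "s_u u = {torus_map x | x. (\<lambda>n. torus_map (real_of_int (u n) * x)) \<longlonglongrightarrow> torus_map 0}"

end

theory Submission
  imports Defs
begin


lemma torus_map_add: "torus_map (a + b) = torus_map a * torus_map b"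
  unfolding torus_map_def by (simp add: distrib_left distrib_right exp_add[symmetric] algebra_simps)

lemma torus_map_int: "torus_map (of_int k) = 1"
proof -
  have "2 * of_real pi * \<i> * of_real (of_int k) = \<i> * (of_int k * (of_real pi * 2))"
    by simp
  then show ?thesis unfolding torus_map_def by (metis exp_2pi_1_int)
qed

lemma torus_map_shift: "torus_map (t + of_int k) = torus_map t"
  by (simp add: torus_map_add torus_map_int)

lemma norm_torus_map [simp]: "norm (torus_map t) = 1"
proof -
  have "2 * of_real pi * \<i> * of_real t = \<i> * of_real (2*pi*t)" by simp
  then show ?thesis unfolding torus_map_def by (metis norm_exp_i_times)
qed

lemma torus_map_in: "torus_map t \<in> torus"
  by (simp add: torus_def)

lemma torus_map_minus1: "norm (torus_map t - 1) \<le> 2 * pi * \<bar>t\<bar>"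
proof -
  have "2 * of_real pi * \<i> * of_real t = \<i> * of_real (2*pi*t)" by simp
  then have "norm (torus_map t - 1) = 2 * \<bar>sin (2*pi*t/2)\<bar>"
    unfolding torus_map_def by (metis dist_exp_i_1)
  also have "\<dots> \<le> 2 * \<bar>2*pi*t/2\<bar>" using abs_sin_x_le_abs_x by simp
  also have "\<dots> = 2 * pi * \<bar>t\<bar>" by (simp add: abs_mult)
  finally show ?thesis .
qed

lemma torus_map_lip: "norm (torus_map a - torus_map b) \<le> 2 * pi * \<bar>a - b\<bar>"
proof -
  have "torus_map a = torus_map b * torus_map (a - b)"
    by (metis torus_map_add add.commute diff_add_cancel)
  then have "torus_map a - torus_map b = torus_map b * (torus_map (a-b) - 1)"
    by (simp add: algebra_simps)
  then have "norm (torus_map a - torus_map b) = norm (torus_map (a-b) - 1)"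
    by (simp add: norm_mult)
  then show ?thesis using torus_map_minus1 by simp
qed

lemma Re_torus_map: "Re (torus_map t) = cos (2*pi*t)"
  unfolding torus_map_def by (simp add: Re_exp)

lemma torus_map_lower:
  assumes "d \<le> t" "t \<le> 1/2" "0 < d"
  shows "1 - cos (2*pi*d) \<le> norm (torus_map t - 1)"
proof -
  have "cos (2*pi*t) \<le> cos (2*pi*d)"
    by (rule cos_monotone_0_pi_le) (use assms in auto)
  moreover have "\<bar>Re (torus_map t - 1)\<bar> \<le> norm (torus_map t - 1)" by (rule abs_Re_le_cmod)
  ultimately show ?thesis using Re_torus_map[of t] by auto
qed

lemma cos_lt1: "0 < d \<Longrightarrow> d \<le> 1/2 \<Longrightarrow> cos (2*pi*d) < 1"
  using cos_monotone_0_pi[of 0 "2*pi*d"] by auto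

lemma torus_map_eq: "torus_map a = torus_map b \<Longrightarrow> \<exists>k::int. a = b + k"
proof -
  assume h: "torus_map a = torus_map b"
  have "torus_map a = torus_map b * torus_map (a - b)"
    by (metis torus_map_add add.commute diff_add_cancel)
  with h have "torus_map (a - b) = 1"
    by (metis mult_cancel_left1 norm_torus_map norm_zero zero_neq_one)
  then have "exp (2 * of_real pi * \<i> * of_real (a-b)) = 1" by (simp add: torus_map_def)
  then obtain n::int where "Im (2 * of_real pi * \<i> * of_real (a-b)) = of_int (2*n) * pi"
    unfolding exp_eq_1 by blast
  then have "a - b = n" by simp
  then show ?thesis by (metis add_diff_cancel_left' add_diff_eq)
qed


lemma aseq_pos: assumes "a_sequence u" "n \<ge> 1" shows "u n > 0"
proof -
  have sm: "strict_mono u" and dv: "\<And>n. u n dvd u (Suc n)" using assms(1) unfolding a_sequence_def by auto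
  have nz: "u n \<noteq> 0" for n
  proof
    assume "u n = 0"
    then have "u (Suc n) = 0" using dv[of n] by simp
    with \<open>u n = 0\<close> sm show False unfolding strict_mono_def by (metis lessI less_irrefl)
  qed
  have "u 1 > 0"
  proof (rule ccontr)
    assume "\<not> u 1 > 0"
    then have n1: "u 1 < 0" using nz[of 1] by simp
    have "u 0 < u 1" using sm unfolding strict_mono_def by simp
    obtain k where k: "u 1 = u 0 * k" using dv[of 0] by (auto simp: dvd_def)
    have "u 0 < 0" using n1 \<open>u 0 < u 1\<close> by simp
    then have "k > 0" using k n1 by (simp add: zero_less_mult_iff mult_less_0_iff)
    then have "u 0 * k \<le> u 0 * 1" using \<open>u 0 < 0\<close> by (intro mult_left_mono_neg) auto
    then show False using k \<open>u 0 < u 1\<close> by simp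
  qed
  moreover have "u 1 \<le> u n" using sm assms(2) by (simp add: strict_mono_less_eq)
  ultimately show ?thesis by simp
qed

lemma aseq_double: assumes "a_sequence u" "n \<ge> 1" shows "u (Suc n) \<ge> 2 * u n"
proof -
  have sm: "strict_mono u" and dv: "\<And>n. u n dvd u (Suc n)" using assms(1) unfolding a_sequence_def by auto
  obtain k where k: "u (Suc n) = u n * k" using dv[of n] by (auto simp: dvd_def)
  have p: "u n > 0" using aseq_pos assms by auto
  have "u n < u (Suc n)" using sm unfolding strict_mono_def by simp
  then have "k > 1" using k p by (metis mult.right_neutral mult_less_cancel_left_pos not_less)
  then have "u n * 2 \<le> u n * k" using p by simp
  then show ?thesis using k by simp
qed

lemma aseq_pow: assumes "a_sequence u" "n \<ge> 1" shows "u (n + k) \<ge> 2 ^ k * u n"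
proof (induction k)
  case 0 then show ?case by simp
next
  case (Suc k)
  have "u (Suc (n + k)) \<ge> 2 * u (n+k)" using aseq_double[OF assms(1)] assms(2) by simp
  then show ?case using Suc by simp
qed

lemma aseq_dvd: assumes "a_sequence u" "m \<le> n" shows "u m dvd u n"
  using assms(2)
proof (induction n)
  case 0 then show ?case by simp
next
  case (Suc n)
  show ?case
  proof (cases "m = Suc n")
    case False
    then have "u m dvd u n" using Suc by simp
    then show ?thesis using assms(1) unfolding a_sequence_def using dvd_trans by blast
  qed simp
qed

lemma aseq_ratio: assumes "a_sequence u" "n \<ge> 1" shows "u n = ratios u n * u (n - 1)"
proof -
  have "u (n-1) dvd u n" using aseq_dvd[OF assms(1)] by simp
  then show ?thesis using assms(2) unfolding ratios_def by auto
qed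

lemma aseq_ratio_pos: assumes "a_sequence u" "n \<ge> 2" shows "ratios u n > 0"
proof -
  have "u n > 0" "u (n-1) > 0" using aseq_pos[OF assms(1)] assms(2) by auto
  then show ?thesis using aseq_ratio[OF assms(1), of n] assms(2) by (simp add: zero_less_mult_iff)
qed

lemma unbounded_late:
  assumes "\<forall>B::int. \<exists>n. \<bar>ratios u n\<bar> > B"
  shows "\<exists>n\<ge>M. \<bar>ratios u n\<bar> > B"
proof -
  define B' where "B' = max B (Max ((\<lambda>n. \<bar>ratios u n\<bar>) ` {..<M}))"
  obtain n where n: "\<bar>ratios u n\<bar> > B'" using assms by blast
  have "n \<ge> M"
  proof (rule ccontr)
    assume "\<not> n \<ge> M"
    then have "\<bar>ratios u n\<bar> \<le> Max ((\<lambda>n. \<bar>ratios u n\<bar>) ` {..<M})" by (intro Max_ge) auto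
    then show False using n unfolding B'_def by simp
  qed
  moreover have "\<bar>ratios u n\<bar> > B" using n unfolding B'_def by simp
  ultimately show ?thesis by blast
qed

lemma choose_N:
  assumes "a_sequence u" "\<forall>B::int. \<exists>n. \<bar>ratios u n\<bar> > B"
  shows "\<exists>N. strict_mono N \<and> N 0 \<ge> 2 \<and> (\<forall>j. ratios u (N j) \<ge> 2 ^ j)
     \<and> (\<forall>j. u (N (Suc j) - 1) \<ge> 2 ^ (j+4) * u (N j))"
proof -
  have "\<forall>m j. \<exists>n. n \<ge> m + j + 6 \<and> ratios u n \<ge> 2 ^ j"
  proof (intro allI)
    fix m j
    obtain n where n: "n \<ge> m + j + 6" "\<bar>ratios u n\<bar> > 2^j" using unbounded_late[OF assms(2)] by blast
    have "ratios u n > 0" using aseq_ratio_pos[OF assms(1)] n(1) by simp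
    then show "\<exists>n. n \<ge> m + j + 6 \<and> ratios u n \<ge> 2 ^ j" using n by auto
  qed
  then obtain g where g: "\<And>m j. g m j \<ge> m + j + 6 \<and> ratios u (g m j) \<ge> 2 ^ j" by metis
  define N where "N = rec_nat (g 0 0) (\<lambda>j Nj. g Nj (Suc j))"
  have N0: "N 0 = g 0 0" and NS: "\<And>j. N (Suc j) = g (N j) (Suc j)" unfolding N_def by auto
  have "N n < N (Suc n)" for n using g[of "N n" "Suc n"] NS[of n] by simp
  then have sm: "strict_mono N" by (simp add: strict_mono_Suc_iff)
  have r: "ratios u (N j) \<ge> 2 ^ j" for j
  proof (cases j)
    case 0 then show ?thesis using g[of 0 0] N0 by simp
  next
    case (Suc i) then show ?thesis using g[of "N i" "Suc i"] NS[of i] by simp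
  qed
  have "u (N (Suc j) - 1) \<ge> 2 ^ (j+4) * u (N j)" for j
  proof -
    have ge: "N (Suc j) - 1 \<ge> N j + (j + 4)" using g[of "N j" "Suc j"] NS[of j] by linarith
    have "N 0 \<le> N j" using sm by (simp add: strict_mono_less_eq)
    then have "N j \<ge> 1" using g[of 0 0] N0 by simp
    then have "u (N j + (j+4)) \<ge> 2^(j+4) * u (N j)" by (rule aseq_pow[OF assms(1)])
    moreover have "u (N j + (j+4)) \<le> u (N (Suc j) - 1)"
      using ge assms(1) unfolding a_sequence_def by (simp add: strict_mono_less_eq)
    ultimately show ?thesis by simp
  qed
  moreover have "N 0 \<ge> 2" using g[of 0 0] N0 by simp
  ultimately show ?thesis using sm r by blast
qed


lemma geom_tail: "summable (\<lambda>i. (1/2::real)^(i+k)) \<and> (\<Sum>i. (1/2::real)^(i+k+1)) = (1/2)^k"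
proof -
  have s: "summable (\<lambda>i. (1/2::real)^i)" by (rule summable_geometric) simp
  have e: "(\<Sum>i. (1/2::real)^i) = 2" using suminf_geometric[of "1/2::real"] by simp
  have "(\<lambda>i. (1/2::real)^(i+k)) = (\<lambda>i. (1/2)^i * (1/2)^k)" by (simp add: power_add)
  then have s2: "summable (\<lambda>i. (1/2::real)^(i+k))" using summable_mult2[OF s] by simp
  have "(\<lambda>i. (1/2::real)^(i+k+1)) = (\<lambda>i. (1/2)^i * (1/2)^(k+1))" by (simp add: power_add)
  have "(\<Sum>i. (1/2::real)^(i+k+1)) = (\<Sum>i. (1/2)^i * (1/2)^(k+1))"
    by (intro arg_cong[where f=suminf] ext) (simp add: power_add)
  also have "\<dots> = (\<Sum>i. (1/2::real)^i) * (1/2)^(k+1)" by (rule suminf_mult2[OF s, symmetric])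
  also have "\<dots> = (1/2)^k" using e by simp
  finally show ?thesis using s2 by simp
qed

locale blocks =
  fixes u :: "nat \<Rightarrow> int" and N :: "nat \<Rightarrow> nat"
  assumes aseq: "a_sequence u" and smN: "strict_mono N" and N0: "N 0 \<ge> 2"
    and Qbig: "\<And>j. ratios u (N j) \<ge> 2 ^ j"
    and Pbig: "\<And>j. u (N (Suc j) - 1) \<ge> 2 ^ (j+4) * u (N j)"
begin

definition Q :: "nat \<Rightarrow> int" where "Q j = ratios u (N j)"
definition dig :: "(nat \<Rightarrow> nat) \<Rightarrow> nat \<Rightarrow> int" where "dig lev j = Q j div (int (lev j) + 3)"
definition trm :: "(nat \<Rightarrow> nat) \<Rightarrow> nat \<Rightarrow> real" where
  "trm lev i = real_of_int (dig lev i) / real_of_int (u (N i))"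
definition X :: "(nat \<Rightarrow> nat) \<Rightarrow> real" where "X lev = suminf (trm lev)"

lemma Nge: "N j \<ge> 2" using N0 smN by (metis le_trans strict_mono_less_eq zero_le)
lemma upos: "n \<ge> 1 \<Longrightarrow> u n > 0" using aseq_pos[OF aseq] by auto
lemma umono: "m \<le> n \<Longrightarrow> u m \<le> u n" using aseq unfolding a_sequence_def by (simp add: strict_mono_less_eq)
lemma Qpos: "Q j > 0" unfolding Q_def using Qbig[of j] by (smt (verit) zero_less_power)
lemma UQP: "u (N j) = Q j * u (N j - 1)" unfolding Q_def using aseq_ratio[OF aseq, of "N j"] Nge[of j] by simp
lemma Pge: "j \<ge> 1 \<Longrightarrow> u (N j - 1) \<ge> 2 ^ (j+3) * u (N (j - 1))"
proof -
  assume j: "j \<ge> 1"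
  have "j - 1 + 4 = j + 3" "Suc (j-1) = j" using j by auto
  then show ?thesis using Pbig[of "j-1"] by metis
qed

lemma dig_nonneg: "dig lev j \<ge> 0" unfolding dig_def using Qpos[of j] by (simp add: pos_imp_zdiv_nonneg_iff)
lemma dig_upper: "dig lev j * (int (lev j) + 3) \<le> Q j"
proof -
  have p: "int (lev j) + 3 > 0" by simp
  have "Q j mod (int (lev j) + 3) \<ge> 0" using p by simp
  moreover have "Q j = dig lev j * (int (lev j) + 3) + Q j mod (int (lev j) + 3)"
    unfolding dig_def by (metis div_mult_mod_eq)
  ultimately show ?thesis by linarith
qed
lemma dig_lower: "Q j < (dig lev j + 1) * (int (lev j) + 3)"
proof -
  have p: "int (lev j) + 3 > 0" by simp
  have "Q j mod (int (lev j) + 3) < int (lev j) + 3" using p by simp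
  moreover have "Q j = dig lev j * (int (lev j) + 3) + Q j mod (int (lev j) + 3)"
    unfolding dig_def by (metis div_mult_mod_eq)
  ultimately show ?thesis by (simp only: distrib_right mult_1_left)
qed

lemma dig3: "3 * dig lev j \<le> Q j"
proof -
  have "dig lev j * 3 \<le> dig lev j * (int (lev j) + 3)" using dig_nonneg[of lev j] by (intro mult_left_mono) auto
  then show ?thesis using dig_upper[of lev j] by simp
qed

lemma K:
  assumes "i \<ge> 1" "0 \<le> w" "w \<le> real_of_int (u (N (i-1)))"
  shows "0 \<le> trm lev i * w \<and> trm lev i * w \<le> (1/2)^(i+4)"
proof -
  define P where "P = real_of_int (u (N i - 1))"
  define q where "q = real_of_int (Q i)"
  define d where "d = real_of_int (dig lev i)"
  have Pp: "P > 0" unfolding P_def using upos Nge[of i] by simp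
  have qp: "q > 0" unfolding q_def using Qpos by simp
  have d0: "d \<ge> 0" unfolding d_def using dig_nonneg by simp
  have d3: "3 * d \<le> q" unfolding d_def q_def using dig3[of lev i] by linarith
  have PW: "2^(i+3) * w \<le> P"
  proof -
    have "2^(i+3) * w \<le> 2^(i+3) * real_of_int (u (N (i-1)))" using assms by simp
    also have "\<dots> \<le> P" unfolding P_def using Pge[OF assms(1)] by (metis of_int_le_iff of_int_mult of_int_numeral of_int_power)
    finally show ?thesis .
  qed
  have U: "real_of_int (u (N i)) = q * P" unfolding q_def P_def using UQP[of i] by simp
  have t: "trm lev i * w = d * w / (q * P)" unfolding trm_def U d_def by simp
  have "d * w * 2^(i+4) \<le> (q/3) * w * 2^(i+4)" using d3 assms(2) by (intro mult_right_mono) auto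
  also have "\<dots> = (q/3) * 2 * (2^(i+3) * w)" by (simp add: power_add)
  also have "\<dots> \<le> (q/3) * 2 * P" using PW qp by (intro mult_left_mono) auto
  also have "\<dots> \<le> q * P" using qp Pp by simp
  finally have "d * w * 2^(i+4) \<le> q * P" .
  then have "d * w / (q * P) \<le> 1 / 2^(i+4)" using qp Pp by (simp add: field_simps)
  moreover have "0 \<le> d * w / (q * P)" using d0 assms(2) qp Pp by simp
  ultimately show ?thesis using t by (simp add: power_one_over)
qed

lemma trm_nonneg: "trm lev i \<ge> 0"
  unfolding trm_def using dig_nonneg[of lev i] upos[of "N i"] Nge[of i] by simp

lemma summable_trmw: "summable (\<lambda>i. trm lev i * w)"
proof -
  have s: "summable (trm lev)"
  proof (rule summable_comparison_test'[where N=1])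
    show "summable (\<lambda>i. (1/2::real)^(i+4))" using geom_tail by blast
    fix i :: nat assume "i \<ge> 1"
    have "1 \<le> real_of_int (u (N (i-1)))" using upos[of "N (i-1)"] Nge[of "i-1"] by simp
    then show "norm (trm lev i) \<le> (1/2)^(i+4)" using K[OF \<open>i \<ge> 1\<close>, of 1 lev] trm_nonneg[of lev i] by simp
  qed
  then show ?thesis by (rule summable_mult2)
qed

end

context blocks begin

lemma decomp:
  assumes j: "j \<ge> 1" and n1: "N (j-1) \<le> n" and n2: "n \<le> N j - 1"
  shows "\<exists>k::int. real_of_int (u n) * X lev = of_int k + (\<Sum>i. trm lev (i+j) * real_of_int (u n))
    \<and> trm lev j * real_of_int (u n) \<le> (\<Sum>i. trm lev (i+j) * real_of_int (u n))
    \<and> (\<Sum>i. trm lev (i+j) * real_of_int (u n)) \<le> trm lev j * real_of_int (u n) + (1/2)^(j+4)"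
proof -
  define w where "w = real_of_int (u n)"
  define f where "f i = trm lev i * w" for i
  have wpos: "w > 0" unfolding w_def using upos[of n] Nge[of "j-1"] n1 by simp
  have sf: "summable f" unfolding f_def by (rule summable_trmw)
  have "real_of_int (u n) * X lev = suminf f"
    unfolding X_def f_def w_def using suminf_mult2[of "trm lev" "real_of_int (u n)"] summable_trmw[of lev 1]
    by (simp add: mult.commute)
  also have "\<dots> = (\<Sum>i. f (i+j)) + (\<Sum>i<j. f i)" by (rule suminf_split_initial_segment[OF sf])
  finally have e1: "real_of_int (u n) * X lev = (\<Sum>i. f (i+j)) + (\<Sum>i<j. f i)" .
  have fi: "f i = of_int (dig lev i * (u n div u (N i)))" if "i < j" for i
  proof -
    have "N i \<le> N (j-1)" using that smN by (simp add: strict_mono_less_eq)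
    then have "u (N i) dvd u n" using aseq_dvd[OF aseq] n1 by simp
    then obtain c where c: "u n = u (N i) * c" by (auto simp: dvd_def)
    have up: "u (N i) > 0" using upos Nge[of i] by simp
    have "f i = real_of_int (dig lev i) * (real_of_int (u (N i)) * of_int c) / real_of_int (u (N i))"
      unfolding f_def trm_def w_def c by simp
    also have "\<dots> = of_int (dig lev i * c)" using up by simp
    finally show ?thesis using c up by simp
  qed
  have "(\<Sum>i<j. f i) = of_int (\<Sum>i<j. dig lev i * (u n div u (N i)))"
    by (simp add: fi)
  with e1 have e2: "real_of_int (u n) * X lev = of_int (\<Sum>i<j. dig lev i * (u n div u (N i))) + (\<Sum>i. f (i+j))"
    by simp
  define g where "g i = f (i + j)" for i
  have sg: "summable g" unfolding g_def using summable_ignore_initial_segment[OF sf, of j] by simp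
  have gb: "0 \<le> g (Suc i) \<and> g (Suc i) \<le> (1/2)^(i + (j+4) + 1)" for i
  proof -
    have "n \<le> N (i + j)" using n2 smN by (metis diff_le_self le_add2 le_trans strict_mono_less_eq)
    then have "w \<le> real_of_int (u (N (Suc i + j - 1)))" unfolding w_def using umono by simp
    then have "0 \<le> trm lev (Suc i + j) * w \<and> trm lev (Suc i + j) * w \<le> (1/2)^(Suc i + j + 4)"
      using K[of "Suc i + j" w lev] wpos by simp
    moreover have "Suc i + j + 4 = i + (j+4) + 1" by simp
    ultimately show ?thesis unfolding g_def f_def by (simp add: add.assoc)
  qed
  have sg1: "summable (\<lambda>i. g (Suc i))" using sg summable_ignore_initial_segment[OF sg, of 1] by simp
  have h: "(\<Sum>i. g (Suc i)) = suminf g - g 0" by (rule suminf_split_head[OF sg])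
  have "(\<Sum>i. g (Suc i)) \<le> (\<Sum>i. (1/2::real)^(i + (j+4) + 1))"
    apply (rule suminf_le)
    using gb apply blast
    using sg1 apply simp
    using conjunct1[OF geom_tail[of "j+4+1"]] by (simp add: ac_simps)
  also have "\<dots> = (1/2)^(j+4)" using geom_tail[of "j+4"] by simp
  finally have up: "(\<Sum>i. g (Suc i)) \<le> (1/2)^(j+4)" .
  have lo: "0 \<le> (\<Sum>i. g (Suc i))" using gb sg1 by (simp add: suminf_nonneg)
  have "g 0 = trm lev j * real_of_int (u n)" unfolding g_def f_def w_def by simp
  then have "real_of_int (u n) * X lev = of_int (\<Sum>i<j. dig lev i * (u n div u (N i))) + (\<Sum>i. trm lev (i+j) * real_of_int (u n))
    \<and> trm lev j * real_of_int (u n) \<le> (\<Sum>i. trm lev (i+j) * real_of_int (u n))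
    \<and> (\<Sum>i. trm lev (i+j) * real_of_int (u n)) \<le> trm lev j * real_of_int (u n) + (1/2)^(j+4)"
    using e2 h up lo unfolding g_def f_def w_def by linarith
  then show ?thesis by blast
qed

end

context blocks begin

lemma trm_bound1: "i \<ge> 1 \<Longrightarrow> 0 \<le> trm lev i \<and> trm lev i \<le> (1/2)^(i+4)"
proof -
  assume i: "i \<ge> 1"
  have "1 \<le> real_of_int (u (N (i-1)))" using upos[of "N (i-1)"] Nge[of "i-1"] by simp
  then show ?thesis using K[OF i, of 1 lev] by simp
qed

lemma close:
  assumes "\<And>i. i \<le> m \<Longrightarrow> lev i = lev' i"
  shows "\<bar>X lev - X lev'\<bar> \<le> (1/2)^(m+4)"
proof -
  define h where "h i = trm lev i - trm lev' i" for i
  have s1: "summable (trm lev)" using summable_trmw[of lev 1] by simp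
  have s2: "summable (trm lev')" using summable_trmw[of lev' 1] by simp
  have sh: "summable h" unfolding h_def using summable_diff[OF s1 s2] .
  have "X lev - X lev' = suminf h" unfolding X_def h_def using suminf_diff[OF s1 s2] by simp
  also have "\<dots> = (\<Sum>i. h (i + Suc m)) + (\<Sum>i<Suc m. h i)" by (rule suminf_split_initial_segment[OF sh])
  also have "(\<Sum>i<Suc m. h i) = 0" unfolding h_def trm_def dig_def using assms by (intro sum.neutral) auto
  finally have e: "X lev - X lev' = (\<Sum>i. h (i + Suc m))" by simp
  have hb: "\<bar>h (i + Suc m)\<bar> \<le> (1/2)^(i + (m+4) + 1)" for i
  proof -
    have "i + Suc m \<ge> 1" by simp
    then have "0 \<le> trm lev (i + Suc m) \<and> trm lev (i + Suc m) \<le> (1/2)^(i + Suc m + 4)"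
      "0 \<le> trm lev' (i + Suc m) \<and> trm lev' (i + Suc m) \<le> (1/2)^(i + Suc m + 4)"
      using trm_bound1 by blast+
    moreover have "i + Suc m + 4 = i + (m+4) + 1" by simp
    ultimately show ?thesis unfolding h_def by (simp only:) linarith
  qed
  have sh2: "summable (\<lambda>i. h (i + Suc m))" using summable_ignore_initial_segment[OF sh] .
  have sg: "summable (\<lambda>i. (1/2::real)^(i + (m+4) + 1))"
    using conjunct1[OF geom_tail[of "m+4+1"]] by (simp add: ac_simps)
  have g: "(\<Sum>i. (1/2::real)^(i + (m+4) + 1)) = (1/2)^(m+4)" using geom_tail by blast
  have "(\<Sum>i. h (i + Suc m)) \<le> (\<Sum>i. (1/2::real)^(i + (m+4) + 1))"
    by (rule suminf_le[OF _ sh2 sg]) (use hb in \<open>simp add: abs_le_iff\<close>)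
  moreover have "(\<Sum>i. - ((1/2::real)^(i + (m+4) + 1))) \<le> (\<Sum>i. h (i + Suc m))"
    apply (rule suminf_le[OF _ summable_minus[OF sg] sh2])
    subgoal for i using hb[of i] unfolding abs_le_iff by linarith
    done
  moreover have "(\<Sum>i. - ((1/2::real)^(i + (m+4) + 1))) = - ((1/2)^(m+4))"
    using suminf_minus[OF sg] g by simp
  ultimately show ?thesis using e g by simp
qed

lemma trm_top: "j \<ge> 1 \<Longrightarrow> n \<le> N j - 1 \<Longrightarrow> n \<ge> 1 \<Longrightarrow>
   trm lev j * real_of_int (u n) \<le> 1 / (real (lev j) + 3)"
proof -
  assume a: "j \<ge> 1" "n \<le> N j - 1" "n \<ge> 1"
  define P where "P = real_of_int (u (N j - 1))"
  define q where "q = real_of_int (Q j)"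
  define d where "d = real_of_int (dig lev j)"
  have Pp: "P > 0" unfolding P_def using upos Nge[of j] by simp
  have qp: "q > 0" unfolding q_def using Qpos by simp
  have d0: "d \<ge> 0" unfolding d_def using dig_nonneg by simp
  have "real_of_int (dig lev j * (int (lev j) + 3)) \<le> real_of_int (Q j)" using dig_upper[of lev j] by (simp only: of_int_le_iff)
  then have du: "d * (real (lev j) + 3) \<le> q" unfolding d_def q_def by simp
  have w0: "0 \<le> real_of_int (u n)" using upos[OF a(3)] by simp
  have wP: "real_of_int (u n) \<le> P" unfolding P_def using umono[OF a(2)] by simp
  have U: "real_of_int (u (N j)) = q * P" unfolding q_def P_def using UQP[of j] by simp
  have "trm lev j * real_of_int (u n) = d * real_of_int (u n) / (q * P)" unfolding trm_def U d_def by simp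
  also have "\<dots> \<le> d * P / (q * P)" using wP d0 qp Pp by (intro divide_right_mono mult_left_mono) auto
  also have "\<dots> = d / q" using Pp by simp
  also have "\<dots> \<le> 1 / (real (lev j) + 3)" using du qp by (simp add: field_simps)
  finally show ?thesis .
qed

lemma trm_exact: "j \<ge> 1 \<Longrightarrow>
   trm lev j * real_of_int (u (N j - 1)) \<ge> 1 / (real (lev j) + 3) - (1/2)^j"
proof -
  assume a: "j \<ge> 1"
  define P where "P = real_of_int (u (N j - 1))"
  define q where "q = real_of_int (Q j)"
  define d where "d = real_of_int (dig lev j)"
  define m where "m = real (lev j) + 3"
  have Pp: "P > 0" unfolding P_def using upos Nge[of j] by simp
  have qp: "q > 0" unfolding q_def using Qpos by simp
  have mp: "m > 0" unfolding m_def by simp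
  have "real_of_int (Q j) < real_of_int ((dig lev j + 1) * (int (lev j) + 3))" using dig_lower[of j lev] by (simp only: of_int_less_iff)
  then have dl: "q < (d + 1) * m" unfolding d_def q_def m_def by simp
  have "real_of_int (2^j) \<le> real_of_int (Q j)" unfolding Q_def using Qbig[of j] by (simp only: of_int_le_iff)
  then have qb: "q \<ge> 2^j" unfolding q_def by simp
  have U: "real_of_int (u (N j)) = q * P" unfolding q_def P_def using UQP[of j] by simp
  have "trm lev j * P = d / q" unfolding trm_def U d_def P_def[symmetric] using Pp by simp
  moreover have "d / q \<ge> 1/m - 1/q"
  proof -
    have dm: "q - m \<le> d * m" using dl by (simp add: distrib_right)
    have "1/m - 1/q = (q - m)/(m*q)" using qp mp by (simp add: field_simps)
    also have "\<dots> \<le> (d*m)/(m*q)" using dm qp mp by (intro divide_right_mono) auto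
    also have "\<dots> = d/q" using mp by simp
    finally show ?thesis .
  qed
  moreover have "1/q \<le> (1/2)^j" using qb qp by (simp add: field_simps power_one_over)
  ultimately show ?thesis unfolding P_def m_def by linarith
qed

end


lemma pow_small: "(e::real) > 0 \<Longrightarrow> \<exists>J. \<forall>j\<ge>J. (1/2::real)^j < e"
proof -
  assume e: "e > 0"
  obtain J where J: "(1/2::real)^J < e" using real_arch_pow_inv[OF e, of "1/2"] by auto
  have "(1/2::real)^j \<le> (1/2)^J" if "j \<ge> J" for j using that by (intro power_decreasing) auto
  then show ?thesis using J by (meson le_less_trans)
qed

lemma torus_map_0: "torus_map 0 = 1" using torus_map_int[of 0] by simp

context blocks begin

lemma good:
  assumes lv: "\<forall>K. \<exists>J. \<forall>j\<ge>J. lev j \<ge> K"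
  shows "torus_map (X lev) \<in> s_u u"
proof -
  have "(\<lambda>n. torus_map (real_of_int (u n) * X lev)) \<longlonglongrightarrow> torus_map 0"
  proof (rule LIMSEQ_I)
    fix r :: real assume r: "r > 0"
    obtain K :: nat where K: "4 * pi / r < K" using reals_Archimedean2 by blast
    have Kb: "2 * pi / (real K + 3) < r / 2"
    proof -
      have "4 * pi < r * K" using K r by (simp add: field_simps)
      then have "4 * pi < r * (real K + 3)" using r by (smt (verit) mult_left_mono of_nat_0_le_iff)
      then show ?thesis using r by (simp add: field_simps)
    qed
    obtain J1 where J1: "\<forall>j\<ge>J1. lev j \<ge> K" using lv by blast
    obtain J2 where J2: "\<forall>j\<ge>J2. (1/2::real)^j < r / (4 * pi)"
      using pow_small[of "r / (4*pi)"] r by auto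
    define J0 where "J0 = max J1 J2"
    show "\<exists>no. \<forall>n\<ge>no. norm (torus_map (real_of_int (u n) * X lev) - torus_map 0) < r"
    proof (intro exI allI impI)
      fix n assume n: "n \<ge> N J0"
      define j where "j = (LEAST j. n < N j)"
      have ex: "n < N (Suc n)" using strict_mono_imp_increasing[OF smN, of "Suc n"] by simp
      have nj: "n < N j" unfolding j_def by (rule LeastI[of _ "Suc n"]) (rule ex)
      have jJ: "j > J0"
      proof (rule ccontr)
        assume "\<not> j > J0"
        then have "N j \<le> N J0" using smN by (simp add: strict_mono_less_eq)
        then show False using n nj by simp
      qed
      then have j1: "j \<ge> 1" by simp
      have "\<not> n < N (j - 1)" unfolding j_def by (rule not_less_Least) (use j1 j_def in simp)
      then have nj1: "N (j-1) \<le> n" by simp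
      have njm: "n \<le> N j - 1" using nj by simp
      obtain k where k: "real_of_int (u n) * X lev = of_int k + (\<Sum>i. trm lev (i+j) * real_of_int (u n))"
        and lo: "trm lev j * real_of_int (u n) \<le> (\<Sum>i. trm lev (i+j) * real_of_int (u n))"
        and hi: "(\<Sum>i. trm lev (i+j) * real_of_int (u n)) \<le> trm lev j * real_of_int (u n) + (1/2)^(j+4)"
        using decomp[OF j1 nj1 njm, of lev] by auto
      define R where "R = (\<Sum>i. trm lev (i+j) * real_of_int (u n))"
      have n1: "n \<ge> 1" using nj1 Nge[of "j-1"] by simp
      have t0: "0 \<le> trm lev j * real_of_int (u n)" using trm_nonneg[of lev j] upos[OF n1] by simp
      have tt: "trm lev j * real_of_int (u n) \<le> 1 / (real (lev j) + 3)"
        using trm_top[OF j1 _ n1] nj by simp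
      have lj: "lev j \<ge> K" using J1 jJ unfolding J0_def by simp
      have "1 / (real (lev j) + 3) \<le> 1 / (real K + 3)" using lj by (simp add: frac_le)
      moreover have "(1/2::real)^(j+4) \<le> (1/2)^j" by (intro power_decreasing) auto
      moreover have "(1/2::real)^j < r / (4*pi)" using J2 jJ unfolding J0_def by simp
      ultimately have Rb: "R < 1 / (real K + 3) + r / (4*pi)" and R0: "0 \<le> R"
        using lo hi tt t0 unfolding R_def by linarith+
      have "torus_map (real_of_int (u n) * X lev) = torus_map R"
        unfolding k R_def[symmetric] by (metis add.commute torus_map_shift)
      then have "norm (torus_map (real_of_int (u n) * X lev) - torus_map 0) \<le> 2 * pi * \<bar>R\<bar>"
        using torus_map_minus1[of R] torus_map_0 by simp
      also have "\<dots> = 2 * pi * R" using R0 by simp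
      also have "\<dots> < 2 * pi * (1 / (real K + 3) + r / (4*pi))" using Rb by simp
      also have "\<dots> = 2 * pi / (real K + 3) + r / 2"
      proof -
        have aux: "2 * pi * (r / (4*pi)) = r / 2" by simp
        show ?thesis using aux by (simp add: distrib_left)
      qed
      also have "\<dots> < r" using Kb by linarith
      finally show "norm (torus_map (real_of_int (u n) * X lev) - torus_map 0) < r" .
    qed
  qed
  then show ?thesis unfolding s_u_def by blast
qed

lemma bad:
  assumes lv: "\<forall>j\<ge>J. lev j = k"
  shows "torus_map (X lev) \<notin> s_u u"
proof
  assume "torus_map (X lev) \<in> s_u u"
  then obtain x where eq: "torus_map (X lev) = torus_map x"
    and lim: "(\<lambda>n. torus_map (real_of_int (u n) * x)) \<longlonglongrightarrow> torus_map 0"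
    unfolding s_u_def by auto
  obtain c :: int where c: "x = X lev + c" using torus_map_eq[OF eq[symmetric]] by blast
  have "torus_map (real_of_int (u n) * x) = torus_map (real_of_int (u n) * X lev)" for n
  proof -
    have "real_of_int (u n) * x = real_of_int (u n) * X lev + of_int (u n * c)" unfolding c by (simp add: algebra_simps)
    then show ?thesis by (metis torus_map_shift)
  qed
  with lim have lim': "(\<lambda>n. torus_map (real_of_int (u n) * X lev)) \<longlonglongrightarrow> 1" by (simp add: torus_map_0)
  define \<delta> where "\<delta> = 1 / (2 * (real k + 3))"
  have d0: "\<delta> > 0" and d1: "\<delta> \<le> 1/2" unfolding \<delta>_def by (auto simp: field_simps)
  define cc where "cc = 1 - cos (2*pi*\<delta>)"
  have cc0: "cc > 0" unfolding cc_def using cos_lt1[OF d0 d1] by simp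
  obtain no where no: "\<forall>n\<ge>no. norm (torus_map (real_of_int (u n) * X lev) - 1) < cc"
    using LIMSEQ_D[OF lim' cc0] by blast
  obtain J3 where J3: "\<forall>j\<ge>J3. (1/2::real)^j < \<delta>" using pow_small[OF d0] by blast
  define j where "j = max (max J (Suc no)) (max J3 1)"
  have j1: "j \<ge> 1" unfolding j_def by simp
  have lj: "lev j = k" using lv unfolding j_def by simp
  define n where "n = N j - 1"
  have "j \<ge> Suc no" unfolding j_def by simp
  then have nno: "n \<ge> no" unfolding n_def using strict_mono_imp_increasing[OF smN, of j] by linarith
  have "N (j-1) < N j" using smN j1 by (simp add: strict_mono_less)
  then have nj1: "N (j-1) \<le> n" unfolding n_def by simp
  have n1: "n \<ge> 1" unfolding n_def using Nge[of j] by simp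
  obtain kk where k: "real_of_int (u n) * X lev = of_int kk + (\<Sum>i. trm lev (i+j) * real_of_int (u n))"
    and lo: "trm lev j * real_of_int (u n) \<le> (\<Sum>i. trm lev (i+j) * real_of_int (u n))"
    and hi: "(\<Sum>i. trm lev (i+j) * real_of_int (u n)) \<le> trm lev j * real_of_int (u n) + (1/2)^(j+4)"
    using decomp[OF j1 nj1, of lev] unfolding n_def by auto
  define R where "R = (\<Sum>i. trm lev (i+j) * real_of_int (u n))"
  have tt: "trm lev j * real_of_int (u n) \<le> 1 / (real k + 3)"
    using trm_top[OF j1 _ n1, of lev] lj unfolding n_def by simp
  have te: "trm lev j * real_of_int (u n) \<ge> 1 / (real k + 3) - (1/2)^j"
    using trm_exact[OF j1, of lev] lj unfolding n_def by simp
  have pj: "(1/2::real)^j < \<delta>" using J3 unfolding j_def by simp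
  have p4: "(1/2::real)^(j+4) \<le> (1/2)^4" by (intro power_decreasing) auto
  have k3: "1 / (real k + 3) \<le> 1/3" by (simp add: frac_le)
  have hd: "1 / (real k + 3) = 2 * \<delta>" unfolding \<delta>_def by (simp add: field_simps)
  have Rlo: "\<delta> \<le> R" using lo te pj hd unfolding R_def by linarith
  have p4': "(1/2::real)^(j+4) \<le> 1/16" using p4 by (simp add: power_one_over)
  have Rhi: "R \<le> 1/2" using hi tt p4' k3 unfolding R_def by linarith
  have "torus_map (real_of_int (u n) * X lev) = torus_map R"
    unfolding k R_def[symmetric] by (metis add.commute torus_map_shift)
  then have "cc \<le> norm (torus_map (real_of_int (u n) * X lev) - 1)"
    using torus_map_lower[OF Rlo Rhi d0] unfolding cc_def by simp
  with no nno show False by force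
qed

end


lemma closed_avoid:
  assumes "closedin torus_top F" "p \<notin> F" "p \<in> torus"
  shows "\<exists>e>0. \<forall>y. cmod (y - p) \<le> e \<longrightarrow> y \<notin> F"
proof -
  obtain T where T: "closed T" "F = torus \<inter> T" using assms(1) unfolding torus_top_def closedin_closed by blast
  show ?thesis
  proof (cases "p \<in> T")
    case False
    then have "p \<in> - T" by simp
    moreover have "open (- T)" using T(1) by auto
    ultimately obtain e where e: "e > 0" "ball p e \<subseteq> - T" using open_contains_ball by blast
    have "\<forall>y. cmod (y - p) \<le> e/2 \<longrightarrow> y \<notin> F"
    proof (intro allI impI)
      fix y assume "cmod (y - p) \<le> e/2"
      then have "y \<in> ball p e" using e(1) by (simp add: dist_norm norm_minus_commute)
      then show "y \<notin> F" using e T by auto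
    qed
    then show ?thesis using e(1) by (intro exI[of _ "e/2"]) auto
  next
    case True
    then show ?thesis using assms T by auto
  qed
qed

context blocks begin

lemma step_ex:
  assumes "closedin torus_top F" "F \<subseteq> s_u u" "\<forall>j>J0. lev j = k"
  shows "\<exists>J'. J' > J0 \<and> (\<forall>y. cmod (y - torus_map (X lev)) \<le> 2 * pi * (1/2)^(J'+4) \<longrightarrow> y \<notin> F)"
proof -
  have "torus_map (X lev) \<notin> s_u u" using bad[of "Suc J0" lev k] assms(3) by auto
  then have "torus_map (X lev) \<notin> F" using assms(2) by auto
  then obtain e where e: "e > 0" "\<forall>y. cmod (y - torus_map (X lev)) \<le> e \<longrightarrow> y \<notin> F"
    using closed_avoid[OF assms(1) _ torus_map_in] by blast
  obtain J1 where J1: "\<forall>j\<ge>J1. (1/2::real)^j < e / (2*pi)" using pow_small[of "e/(2*pi)"] e(1) by auto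
  define J' where "J' = max (Suc J0) J1"
  have "(1/2::real)^(J'+4) < e / (2*pi)" using J1 unfolding J'_def by simp
  then have "(1/2::real)^(J'+4) * (2*pi) < e" using pos_less_divide_eq[of "2*pi"] pi_gt_zero by simp
  then have lt: "2 * pi * (1/2::real)^(J'+4) < e" by (simp only: mult.commute)
  have "J' > J0" unfolding J'_def by simp
  moreover have "\<forall>y. cmod (y - torus_map (X lev)) \<le> 2 * pi * (1/2)^(J'+4) \<longrightarrow> y \<notin> F"
    using e(2) lt by auto
  ultimately show ?thesis by blast
qed

lemma main_contra:
  fixes C :: "nat \<Rightarrow> complex set"
  assumes C: "\<And>m. closedin torus_top (C m)" and S: "\<Union> (range C) = s_u u"
  shows False
proof -
  have Csub: "C m \<subseteq> s_u u" for m using S by auto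
  define P where "P k lev J J' \<longleftrightarrow> J' > J \<and> (\<forall>y. cmod (y - torus_map (X lev)) \<le> 2 * pi * (1/2)^(J'+4) \<longrightarrow> y \<notin> C k)"
    for k lev J J'
  define stp where "stp k s = (let J' = (SOME J'. P k (fst s) (snd s) J') in ((\<lambda>j. if j \<le> J' then fst s j else Suc k), J'))"
    for k :: nat and s :: "(nat \<Rightarrow> nat) \<times> nat"
  define st where "st = rec_nat ((\<lambda>_. 0::nat), 0::nat) stp"
  define L where "L k = fst (st k)" for k
  define JJ where "JJ k = snd (st k)" for k
  have st0: "L 0 = (\<lambda>_. 0)" "JJ 0 = 0" unfolding L_def JJ_def st_def by auto
  have stSuc: "st (Suc k) = stp k (st k)" for k unfolding st_def by simp
  have stS1: "JJ (Suc k) = (SOME J'. P k (L k) (JJ k) J')" for k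
    unfolding JJ_def L_def stSuc stp_def Let_def by simp
  have stS2: "L (Suc k) = (\<lambda>j. if j \<le> JJ (Suc k) then L k j else Suc k)" for k
    unfolding stS1 unfolding L_def JJ_def stSuc stp_def Let_def by simp
  note stS = stS1 stS2
  have inv: "\<forall>j>JJ k. L k j = k" for k
  proof (cases k)
    case 0 then show ?thesis using st0 by simp
  next
    case (Suc k') then show ?thesis using stS(2)[of k'] by simp
  qed
  have PS: "P k (L k) (JJ k) (JJ (Suc k))" for k
  proof -
    have "\<exists>J'. P k (L k) (JJ k) J'" unfolding P_def using step_ex[OF C Csub inv] .
    then show ?thesis unfolding stS(1) by (rule someI_ex)
  qed
  have JJS: "JJ k < JJ (Suc k)" for k using PS[of k] unfolding P_def by simp
  have smJ: "strict_mono JJ" using JJS by (simp add: strict_mono_Suc_iff)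
  have JJge: "JJ k \<ge> k" for k using strict_mono_imp_increasing[OF smJ] .
  have A: "L (Suc (k + d)) j = L (Suc k) j" if "j \<le> JJ (Suc k)" for k d j
  proof (induction d)
    case 0 then show ?case by simp
  next
    case (Suc d)
    have "JJ (Suc k) \<le> JJ (Suc (Suc (k + d)))" using smJ by (simp add: strict_mono_less_eq)
    then have "j \<le> JJ (Suc (Suc (k + d)))" using that by simp
    then show ?case using Suc stS(2)[of "Suc (k+d)"] by simp
  qed
  define levF where "levF j = L (Suc j) j" for j
  have agree: "levF j = L k j" if "j \<le> JJ (Suc k)" for k j
  proof -
    have e1: "L (Suc k) j = L k j" using stS(2)[of k] that by simp
    show ?thesis
    proof (cases "k \<le> j")
      case True
      then obtain d where "j = k + d" using le_Suc_ex by blast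
      then show ?thesis unfolding levF_def using A[OF that, of d] e1 by simp
    next
      case False
      then obtain d where d: "k = j + d" using le_Suc_ex[of j k] by auto
      have "j \<le> JJ (Suc j)" using JJge[of "Suc j"] by simp
      then have "L (Suc (j + d)) j = L (Suc j) j" by (rule A)
      then show ?thesis unfolding levF_def using e1 d by simp
    qed
  qed
  have notin: "torus_map (X levF) \<notin> C k" for k
  proof -
    have "\<bar>X levF - X (L k)\<bar> \<le> (1/2)^(JJ (Suc k) + 4)" by (rule close) (simp add: agree)
    then have "2 * pi * \<bar>X levF - X (L k)\<bar> \<le> 2 * pi * (1/2)^(JJ (Suc k) + 4)"
      by (rule mult_left_mono) (use pi_gt_zero in simp)
    then have "cmod (torus_map (X levF) - torus_map (X (L k))) \<le> 2 * pi * (1/2)^(JJ (Suc k) + 4)"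
      using torus_map_lip[of "X levF" "X (L k)"] by (rule order_trans[rotated])
    then show ?thesis using PS[of k] unfolding P_def by blast
  qed
  have B: "L m j \<ge> k" if "k \<le> m" "j > JJ k" for m k j
    using that
  proof (induction m arbitrary: k)
    case 0 then show ?case by simp
  next
    case (Suc m)
    show ?case
    proof (cases "k = Suc m")
      case True then show ?thesis using inv[of "Suc m"] Suc.prems by simp
    next
      case False
      then have "k \<le> m" using Suc.prems by simp
      then show ?thesis using Suc.IH[of k] Suc.prems stS(2)[of m] by simp
    qed
  qed
  have grow: "\<forall>K. \<exists>J. \<forall>j\<ge>J. levF j \<ge> K"
  proof
    fix K
    have "levF j \<ge> K" if "j \<ge> Suc (JJ K)" for j
    proof -
      have "K \<le> Suc j" using JJge[of K] that by simp
      then show ?thesis unfolding levF_def using B[of K "Suc j" j] that by simp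
    qed
    then show "\<exists>J. \<forall>j\<ge>J. levF j \<ge> K" by blast
  qed
  have "torus_map (X levF) \<in> s_u u" using good[OF grow] .
  then show False using notin S by auto
qed

end

theorem corollaryE:
  fixes u :: "nat \<Rightarrow> int"
  assumes "a_sequence u"
    and "\<forall>B::int. \<exists>n. \<bar>ratios u n\<bar> > B"
  shows "\<not> fsigma_in torus_top (s_u u)"
proof
  assume fs: "fsigma_in torus_top (s_u u)"
  have "\<exists>C. (\<forall>n. closedin torus_top (C n)) \<and> (\<forall>n. C n \<subseteq> C (Suc n)) \<and> \<Union> (range C) = s_u u"
    using fs by (simp only: fsigma_in_ascending)
  then obtain C :: "nat \<Rightarrow> complex set" where C: "\<forall>n. closedin torus_top (C n)" and S: "\<Union> (range C) = s_u u"
    by blast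
  have C': "closedin torus_top (C n)" for n using C by blast
  obtain N where N: "strict_mono N \<and> N 0 \<ge> 2 \<and> (\<forall>j. ratios u (N j) \<ge> 2 ^ j)
     \<and> (\<forall>j. u (N (Suc j) - 1) \<ge> 2 ^ (j+4) * u (N j))"
    using choose_N[OF assms] by (elim exE) (rule that)
  have N1: "strict_mono N" using N by simp
  have N2: "N 0 \<ge> 2" using N by simp
  have N3: "\<And>j. ratios u (N j) \<ge> 2 ^ j" using N by simp
  have N4: "\<And>j. u (N (Suc j) - 1) \<ge> 2 ^ (j+4) * u (N j)" using N by simp
  have B: "blocks u N" by (rule blocks.intro[OF assms(1) N1 N2 N3 N4])
  show False by (rule blocks.main_contra[OF B _ S]) (rule C')
qed


end
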